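(* Assume ${\bf v}$ has the RCI property and $\mathcal{X}_{\bf v}=[0,\infty)^d$. For $f\in C_0(\mathcal{C}_{\bf v})$ define $\tilde f:[0,\infty)^d\to\mathbb{C}$ by $\tilde f(x)=f(\mathcal{L}^\emptyset_{{\bf v},x})$. Then $\tilde f$ is continuous outside a set of Lebesgue measure zero (namely outside $\bigcup_{J\ne\emptyset}\mathtt X^J_{\bf v}$).
   Context: Let $D\ge d\ge1$ and ${\bf v}=\{v_1,\dots,v_d\}$ linearly independent unit vectors in $\mathbb{R}^D$. For $I\subset\{1,\dots,d\}$: ${\bf v}_I=\{v_i\}_{i\in I}$, ${\bf v}_I\setminus i:={\bf v}_{I\setminus\{i\}}$, $\mathcal{L}_{{\bf v}_I}:=\{n\in\mathbb{Z}^D: v_i\cdot n\ge0\ \forall i\in I\}$, $\mathcal{L}_{\bf v}:=\mathcal{L}_{{\bf v}_{\{1,\dots,d\}}}$, $A_{{\bf v}_I}z=(v_i\cdot z)_{i\in I}$, $\mathcal{X}_{{\bf v}_I}:=\overline{A_{{\bf v}_I}(\mathcal{L}_{{\bf v}_I})}$, $\mathcal{X}_{\bf v}$ for $I=\{1,\dots,d\}$. Subsets of $\mathbb{Z}^D$ carry the Fell topology (= product topology on $\{0,1\}^{\mathbb{Z}^D}$). $\Xi_{{\bf v}_I}:=\overline{\{\mathcal{L}_{{\bf v}_I}-n: n\in\mathcal{L}_{{\bf v}_I}\}}$, $\Xi_\emptyset=\{\mathbb{Z}^D\}$, $\Xi_{\bf v}:=\Xi_{{\bf v}_{\{1,\dots,d\}}}$.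 For nonempty $I$, ${\bf v}_I$ is rational (R) if $A_{{\bf v}_I}(\mathcal{L}_{{\bf v}_I})$ is a closed, discrete, finitely generated subsemigroup of $[0,\infty)^I$, completely irrational (CI) if $\mathcal{X}_{{\bf v}_I}=[0,\infty)^I$; RCI: every ${\bf v}_I$ with $\emptyset\ne I\subsetneq\{1,\dots,d\}$ is R or CI. $\mathcal{C}_{\bf v}:=\Xi_{\bf v}\setminus\bigcup_{i}\Xi_{{\bf v}\setminus i}$ (subspace topology). For $J\subset\{1,\dots,d\}$, $x\in\mathbb{R}^d$: $\mathcal{L}^J_{{\bf v},x}:=\{n\in\mathbb{Z}^D: v_k\cdot n+x_k>0\ (k\in J),\ v_k\cdot n+x_k\ge0\ (k\notin J)\}$; for $J\neq\emptyset$, $\mathtt X^J_{\bf v}:=\{x\in\mathcal{X}_{\bf v}:\forall k\in J\ \exists n\in\mathbb{Z}^D,\ x_k=v_k\cdot n\neq0\}$. *)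

theory Defs
  imports "HOL-Analysis.Analysis"
begin

text \<open>Vectors in R^I (I a subset of the index set) are represented in \<open>real ^ 'd\<close>
  with the coordinates outside I equal to 0.\<close>

definition ivec :: "int ^ 'D::finite \<Rightarrow> real ^ 'D" where
  "ivec n = (\<chi> j. real_of_int (n $ j))"

definition Lat :: "('d::finite \<Rightarrow> real ^ 'D::finite) \<Rightarrow> 'd set \<Rightarrow> (int ^ 'D) set" where
  "Lat v I = {n. \<forall>i\<in>I. v i \<bullet> ivec n \<ge> 0}"

definition Amap :: "('d::finite \<Rightarrow> real ^ 'D::finite) \<Rightarrow> 'd set \<Rightarrow> real ^ 'D \<Rightarrow> real ^ 'd" where
  "Amap v I z = (\<chi> i. if i \<in> I then v i \<bullet> z else 0)"

definition Xset :: "('d::finite \<Rightarrow> real ^ 'D::finite) \<Rightarrow> 'd set \<Rightarrow> (real ^ 'd) set" where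
  "Xset v I = closure ((\<lambda>n. Amap v I (ivec n)) ` Lat v I)"

definition orthant :: "('d::finite) set \<Rightarrow> (real ^ 'd) set" where
  "orthant I = {x. (\<forall>i\<in>I. 0 \<le> x $ i) \<and> (\<forall>i. i \<notin> I \<longrightarrow> x $ i = 0)}"

definition fin_gen_semigroup :: "(real ^ 'd::finite) set \<Rightarrow> bool" where
  "fin_gen_semigroup S \<longleftrightarrow> (\<exists>G. finite G \<and> G \<subseteq> S \<and>
      S = {\<Sum>g\<in>G. real (c g) *\<^sub>R g | c. True})"

definition rational_fam :: "('d::finite \<Rightarrow> real ^ 'D::finite) \<Rightarrow> 'd set \<Rightarrow> bool" where
  "rational_fam v I \<longleftrightarrow>
     (let S = (\<lambda>n. Amap v I (ivec n)) ` Lat v I in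
       closed S \<and> discrete S \<and> fin_gen_semigroup S \<and> S \<subseteq> orthant I)"

definition compl_irrational :: "('d::finite \<Rightarrow> real ^ 'D::finite) \<Rightarrow> 'd set \<Rightarrow> bool" where
  "compl_irrational v I \<longleftrightarrow> Xset v I = orthant I"

definition RCI :: "('d::finite \<Rightarrow> real ^ 'D::finite) \<Rightarrow> bool" where
  "RCI v \<longleftrightarrow> (\<forall>I. I \<noteq> {} \<and> I \<noteq> UNIV \<longrightarrow> rational_fam v I \<or> compl_irrational v I)"

text \<open>Fell topology on subsets of Z^D = product topology on {0,1}^(Z^D).\<close>
definition fell :: "('a set) topology" where
  "fell = pullback_topology UNIV (\<lambda>S n. n \<in> S)
            (product_topology (\<lambda>_. discrete_topology (UNIV :: bool set)) UNIV)"

definition Xi :: "('d::finite \<Rightarrow> real ^ 'D::finite) \<Rightarrow> 'd set \<Rightarrow> (int ^ 'D) set set" where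
  "Xi v I = (if I = {} then {UNIV}
             else fell closure_of {(\<lambda>m. m - n) ` Lat v I | n. n \<in> Lat v I})"

definition Cv :: "('d::finite \<Rightarrow> real ^ 'D::finite) \<Rightarrow> (int ^ 'D) set set" where
  "Cv v = Xi v UNIV - (\<Union>i. Xi v (UNIV - {i}))"

definition C0 :: "('a set) set \<Rightarrow> ('a set \<Rightarrow> complex) \<Rightarrow> bool" where
  "C0 C f \<longleftrightarrow> continuous_map (subtopology fell C) euclidean f \<and>
     (\<forall>e>0. \<exists>K. compactin (subtopology fell C) K \<and> (\<forall>S\<in>C - K. norm (f S) < e))"

definition LJ :: "('d::finite \<Rightarrow> real ^ 'D::finite) \<Rightarrow> 'd set \<Rightarrow> real ^ 'd \<Rightarrow> (int ^ 'D) set" where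
  "LJ v J x = {n. \<forall>k. (k \<in> J \<longrightarrow> v k \<bullet> ivec n + x $ k > 0) \<and>
                        (k \<notin> J \<longrightarrow> v k \<bullet> ivec n + x $ k \<ge> 0)}"

definition XJ :: "('d::finite \<Rightarrow> real ^ 'D::finite) \<Rightarrow> 'd set \<Rightarrow> (real ^ 'd) set" where
  "XJ v J = {x \<in> Xset v UNIV. \<forall>k\<in>J. \<exists>n. x $ k = v k \<bullet> ivec n \<and> x $ k \<noteq> 0}"

end

theory Submission
  imports Defs
begin


lemma topspace_fell[simp]: "topspace fell = UNIV"
  unfolding fell_def by (simp add: topspace_pullback_topology)

lemma fell_eval_cont: "continuous_map fell (discrete_topology (UNIV::bool set)) (\<lambda>S. n \<in> S)"
proof -
  have "continuous_map fell (discrete_topology (UNIV::bool set)) ((\<lambda>x. x n) \<circ> (\<lambda>S n. n \<in> S))"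
    unfolding fell_def
    by (rule continuous_map_pullback) (rule continuous_map_product_projection, simp)
  then show ?thesis by (simp add: o_def)
qed

lemma fell_open_mem: "openin fell {Q. n \<in> Q}" and fell_open_nmem: "openin fell {Q. n \<notin> Q}"
proof -
  have "openin fell {x \<in> topspace fell. (n \<in> x) \<in> A}" for A :: "bool set"
    by (rule openin_continuous_map_preimage[OF fell_eval_cont]) simp
  from this[of "{True}"] this[of "{False}"] show "openin fell {Q. n \<in> Q}" "openin fell {Q. n \<notin> Q}"
    by auto
qed

lemma fell_nbhd:
  assumes "openin fell U" "P \<in> U"
  shows "\<exists>F. finite F \<and> (\<forall>Q. (\<forall>n\<in>F. n \<in> Q \<longleftrightarrow> n \<in> P) \<longrightarrow> Q \<in> U)"
proof -
  obtain V where V: "openin (product_topology (\<lambda>_. discrete_topology (UNIV :: bool set)) UNIV) V"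
    and UV: "U = (\<lambda>S n. n \<in> S) -` V \<inter> UNIV"
    using assms(1) unfolding fell_def openin_pullback_topology by blast
  have "(\<lambda>n. n \<in> P) \<in> V" using assms(2) UV by auto
  then obtain W where W: "finite {i \<in> UNIV. W i \<noteq> topspace (discrete_topology (UNIV :: bool set))}"
    "(\<lambda>n. n \<in> P) \<in> Pi\<^sub>E UNIV W" "Pi\<^sub>E UNIV W \<subseteq> V"
    using V unfolding openin_product_topology_alt by blast
  let ?F = "{i. W i \<noteq> UNIV}"
  have "Q \<in> U" if "\<forall>n\<in>?F. n \<in> Q \<longleftrightarrow> n \<in> P" for Q
  proof -
    have "(x \<in> Q) \<in> W x" for x
    proof (cases "W x = UNIV")
      case False then show ?thesis using W(2) that by (auto simp: PiE_def Pi_def)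
    qed simp
    then have "(\<lambda>n. n \<in> Q) \<in> Pi\<^sub>E UNIV W" by (auto simp: PiE_def Pi_def)
    then show ?thesis using W(3) UV by auto
  qed
  then show ?thesis using W(1) by (intro exI[of _ ?F]) auto
qed

lemma fell_closed_invariant:
  "closedin fell {S::('a::ab_group_add) set. \<forall>m\<in>M. \<forall>p\<in>S. p + m \<in> S}"
proof -
  have "openin fell (UNIV - {S. \<forall>m\<in>M. \<forall>p\<in>S. p + m \<in> S})"
  proof (rule openin_subopen[THEN iffD2], intro ballI)
    fix S assume "S \<in> UNIV - {S. \<forall>m\<in>M. \<forall>p\<in>S. p + m \<in> S}"
    then obtain m p where mp: "m \<in> M" "p \<in> S" "p + m \<notin> S" by auto
    let ?T = "{Q. p \<in> Q} \<inter> {Q. p + m \<notin> Q}"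
    have "openin fell ?T" by (intro openin_Int fell_open_mem fell_open_nmem)
    moreover have "S \<in> ?T" "?T \<subseteq> UNIV - {S. \<forall>m\<in>M. \<forall>p\<in>S. p + m \<in> S}" using mp by auto
    ultimately show "\<exists>T. openin fell T \<and> S \<in> T \<and> T \<subseteq> UNIV - {S. \<forall>m\<in>M. \<forall>p\<in>S. p + m \<in> S}"
      by (intro exI[of _ ?T]) simp
  qed
  then show ?thesis by (simp add: closedin_def)
qed



lemma ivec_add: "ivec (a + b) = ivec a + ivec b"
  by (simp add: ivec_def vec_eq_iff)
lemma ivec_zero: "ivec 0 = 0"
  by (simp add: ivec_def vec_eq_iff)
lemma ivec_minus: "ivec (- a) = - ivec a"
  by (simp add: ivec_def vec_eq_iff)
lemma ivec_diff: "ivec (a - b) = ivec a - ivec b"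
  by (simp add: ivec_def vec_eq_iff)

lemma LJ_empty: "LJ v {} y = {n. \<forall>k. 0 \<le> v k \<bullet> ivec n + y $ k}"
  by (simp add: LJ_def)

lemma density:
  fixes v :: "'d::finite \<Rightarrow> real ^ 'D::finite"
  assumes full: "Xset v UNIV = {x. \<forall>i. 0 \<le> x $ i}"
    and a: "\<forall>k. 0 \<le> a $ k" and e: "e > 0"
  shows "\<exists>n\<in>Lat v UNIV. \<forall>k. a $ k < v k \<bullet> ivec n \<and> v k \<bullet> ivec n < a $ k + e"
proof -
  define b where "b = (\<chi> k. a $ k + e / 2)"
  have "b \<in> Xset v UNIV" using full a e by (simp add: b_def)
  then obtain z where z: "z \<in> (\<lambda>n. Amap v UNIV (ivec n)) ` Lat v UNIV" "dist z b < e / 2"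
    unfolding Xset_def closure_approachable using e by (metis half_gt_zero)
  then obtain n where n: "n \<in> Lat v UNIV" "z = Amap v UNIV (ivec n)" by auto
  have A: "\<bar>z $ k - b $ k\<bar> < e / 2" for k
    using z(2) component_le_norm_cart[of "z - b" k] by (simp add: dist_norm)
  have "a $ k < v k \<bullet> ivec n \<and> v k \<bullet> ivec n < a $ k + e" for k
  proof -
    have "z $ k - b $ k < e / 2 \<and> - (z $ k - b $ k) < e / 2"
      using A[of k] by (simp only: abs_less_iff)
    moreover have "z $ k = v k \<bullet> ivec n" "b $ k = a $ k + e / 2"
      by (simp_all add: n(2) Amap_def b_def)
    ultimately show ?thesis by linarith
  qed
  then show ?thesis using n(1) by blast
qed

lemma negative_dir:
  fixes v :: "'d::finite \<Rightarrow> real ^ 'D::finite"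
  assumes inj: "inj v" and ind: "independent (range v)"
    and unit: "\<forall>k. norm (v k) = 1"
    and full: "Xset v UNIV = {x. \<forall>i. 0 \<le> x $ i}"
  shows "\<exists>m. (\<forall>k. k \<noteq> i \<longrightarrow> 0 \<le> v k \<bullet> ivec m) \<and> v i \<bullet> ivec m < - c"
proof -
  let ?S = "v ` (UNIV - {i})"
  obtain y z where yz: "y \<in> span ?S" "\<And>w. w \<in> span ?S \<Longrightarrow> orthogonal z w" "v i = y + z"
    using orthogonal_subspace_decomp_exists[of ?S "v i"] by blast
  have Seq: "range v - {v i} = ?S" using inj by (auto simp: inj_def)
  have "v i \<notin> span ?S"
    using ind Seq unfolding dependent_def by (metis rangeI)
  then have "z \<noteq> 0" using yz by auto
  have zk: "v k \<bullet> z = 0" if "k \<noteq> i" for k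
    using yz(2)[of "v k"] that by (simp add: span_base orthogonal_def inner_commute)
  have "y \<bullet> z = 0" using yz(2)[OF yz(1)] by (simp add: orthogonal_def inner_commute)
  then have zi: "v i \<bullet> z = z \<bullet> z" using yz(3) by (simp add: inner_add_left)
  have zz: "z \<bullet> z > 0" using \<open>z \<noteq> 0\<close> by simp
  define B :: real where "B = real CARD('D)"
  have B0: "B \<ge> 0" by (simp add: B_def)
  define R where "R = B + 1"
  define t where "t = c + R + 1 + B"
  define w where "w = - ((t / (z \<bullet> z)) *\<^sub>R z)"
  have wk: "v k \<bullet> w = 0" if "k \<noteq> i" for k using zk[OF that] by (simp add: w_def)
  have wi: "v i \<bullet> w = - t" using zi zz by (simp add: w_def)
  define m2 :: "int ^ 'D" where "m2 = (\<chi> j. floor (w $ j))"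
  have err: "\<bar>v k \<bullet> (ivec m2 - w)\<bar> \<le> B" for k
  proof -
    have "\<bar>v k \<bullet> (ivec m2 - w)\<bar> \<le> norm (v k) * norm (ivec m2 - w)"
      by (rule Cauchy_Schwarz_ineq2)
    also have "\<dots> = norm (ivec m2 - w)" using unit by simp
    also have "\<dots> \<le> (\<Sum>j\<in>UNIV. \<bar>(ivec m2 - w) $ j\<bar>)" by (rule norm_le_l1_cart)
    also have "\<dots> \<le> (\<Sum>j\<in>(UNIV::'D set). 1)"
    proof (rule sum_mono)
      fix j :: 'D
      show "\<bar>(ivec m2 - w) $ j\<bar> \<le> 1"
      proof -
        have "real_of_int \<lfloor>w $ j\<rfloor> \<le> w $ j" "w $ j - 1 < real_of_int \<lfloor>w $ j\<rfloor>"
          by (rule of_int_floor_le, rule real_of_int_floor_gt_diff_one)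
        then have "\<bar>real_of_int \<lfloor>w $ j\<rfloor> - w $ j\<bar> \<le> 1" by linarith
        then show ?thesis by (simp add: m2_def ivec_def)
      qed
    qed
    also have "\<dots> = B" by (simp add: B_def)
    finally show ?thesis .
  qed
  have m2k: "v k \<bullet> ivec m2 \<ge> - B" if "k \<noteq> i" for k
    using err[of k] wk[OF that] by (simp add: inner_diff_right abs_le_iff)
  have m2i: "v i \<bullet> ivec m2 \<le> - t + B"
    using err[of i] wi by (simp add: inner_diff_right abs_le_iff)
  obtain m1 where m1: "\<forall>k. (\<chi> k. R) $ k < v k \<bullet> ivec m1 \<and> v k \<bullet> ivec m1 < (\<chi> k. R) $ k + 1"
    using density[OF full, of "\<chi> k. R" 1] B0 by (auto simp: R_def)
  have "(\<forall>k. k \<noteq> i \<longrightarrow> 0 \<le> v k \<bullet> ivec (m1 + m2)) \<and> v i \<bullet> ivec (m1 + m2) < - c"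
  proof (intro conjI allI impI)
    fix k assume "k \<noteq> i"
    then show "0 \<le> v k \<bullet> ivec (m1 + m2)"
      using m1 m2k[of k] by (simp add: ivec_add inner_add_right R_def) (smt (verit))
  next
    show "v i \<bullet> ivec (m1 + m2) < - c"
      using m1 m2i by (simp add: ivec_add inner_add_right R_def t_def) (smt (verit))
  qed
  then show ?thesis by blast
qed


lemma Xi_invariant:
  assumes "S \<in> Xi v I" "m \<in> Lat v I" "p \<in> S"
  shows "p + m \<in> S"
proof (cases "I = {}")
  case True then show ?thesis using assms by (simp add: Xi_def)
next
  case False
  let ?T = "{S. \<forall>m\<in>Lat v I. \<forall>p\<in>S. p + m \<in> S}"
  have "{(\<lambda>q. q - n) ` Lat v I | n. n \<in> Lat v I} \<subseteq> ?T"
  proof clarify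
    fix n m q assume "n \<in> Lat v I" "m \<in> Lat v I" "q \<in> Lat v I"
    then have "q + m \<in> Lat v I"
      by (auto simp: Lat_def ivec_add inner_add_right intro: add_nonneg_nonneg)
    then show "q - n + m \<in> (\<lambda>q. q - n) ` Lat v I"
      by (intro image_eqI[of _ _ "q + m"]) (auto simp: algebra_simps)
  qed
  then have "Xi v I \<subseteq> ?T"
    unfolding Xi_def using False by (simp add: closure_of_minimal fell_closed_invariant)
  then show ?thesis using assms by blast
qed

lemma LJ_in_Xi:
  fixes v :: "'d::finite \<Rightarrow> real ^ 'D::finite"
  assumes full: "Xset v UNIV = {x. \<forall>i. 0 \<le> x $ i}"
    and y: "\<forall>i. 0 \<le> y $ i"
  shows "LJ v {} y \<in> Xi v UNIV"
proof -
  let ?P = "LJ v {} y"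
  let ?G = "{(\<lambda>q. q - n) ` Lat v UNIV | n. n \<in> Lat v UNIV}"
  have "?P \<in> fell closure_of ?G"
    unfolding in_closure_of
  proof (intro conjI allI impI)
    fix T assume T: "?P \<in> T \<and> openin fell T"
    then obtain F where F: "finite F" "\<forall>Q. (\<forall>n\<in>F. n \<in> Q \<longleftrightarrow> n \<in> ?P) \<longrightarrow> Q \<in> T"
      using fell_nbhd by blast
    define bad where "bad = {(p, k). p \<in> F \<and> v k \<bullet> ivec p + y $ k < 0}"
    have "finite bad" unfolding bad_def
      by (rule finite_subset[of _ "F \<times> UNIV"]) (auto simp: F(1))
    define eps where "eps = Min (insert 1 ((\<lambda>(p, k). - (v k \<bullet> ivec p + y $ k)) ` bad))"
    have eps_pos: "eps > 0" unfolding eps_def using \<open>finite bad\<close>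
      by (subst Min_gr_iff) (auto simp: bad_def)
    have eps_le: "eps \<le> - (v k \<bullet> ivec p + y $ k)" if "(p, k) \<in> bad" for p k
      unfolding eps_def using \<open>finite bad\<close> that
      by (intro Min_le) (auto intro: image_eqI[of _ _ "(p, k)"])
    obtain n0 where n0: "n0 \<in> Lat v UNIV" "\<forall>k. y $ k < v k \<bullet> ivec n0 \<and> v k \<bullet> ivec n0 < y $ k + eps"
      using density[OF full y eps_pos] by blast
    let ?Q = "(\<lambda>q. q - n0) ` Lat v UNIV"
    have memQ: "p \<in> ?Q \<longleftrightarrow> p + n0 \<in> Lat v UNIV" for p
      by (auto intro: image_eqI[of _ _ "p + n0"])
    have "p \<in> ?Q \<longleftrightarrow> p \<in> ?P" if "p \<in> F" for p
    proof
      assume "p \<in> ?P"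
      then have "0 \<le> v k \<bullet> ivec p + y $ k" for k by (simp add: LJ_empty)
      then have "0 \<le> v k \<bullet> ivec (p + n0)" for k
        using n0(2) by (simp add: ivec_add inner_add_right) (smt (verit))
      then show "p \<in> ?Q" using memQ by (simp add: Lat_def)
    next
      assume "p \<in> ?Q"
      then have A: "0 \<le> v k \<bullet> ivec p + v k \<bullet> ivec n0" for k
        using memQ by (simp add: Lat_def ivec_add inner_add_right)
      show "p \<in> ?P"
      proof (rule ccontr)
        assume "p \<notin> ?P"
        then obtain k where k: "v k \<bullet> ivec p + y $ k < 0" by (auto simp: LJ_empty not_le)
        then have "(p, k) \<in> bad" using that by (simp add: bad_def)
        from eps_le[OF this] n0(2) A[of k] show False by (smt (verit))
      qed
    qed
    then have "?Q \<in> T" using F(2) by blast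
    moreover have "?Q \<in> ?G" using n0(1) by blast
    ultimately show "\<exists>Q. Q \<in> ?G \<and> Q \<in> T" by blast
  qed simp
  then show ?thesis by (simp add: Xi_def)
qed

lemma LJ_notin_Xi:
  fixes v :: "'d::finite \<Rightarrow> real ^ 'D::finite"
  assumes inj: "inj v" and ind: "independent (range v)"
    and unit: "\<forall>k. norm (v k) = 1"
    and full: "Xset v UNIV = {x. \<forall>i. 0 \<le> x $ i}"
    and y: "\<forall>i. 0 \<le> y $ i"
  shows "LJ v {} y \<notin> Xi v (UNIV - {i})"
proof
  assume H: "LJ v {} y \<in> Xi v (UNIV - {i})"
  obtain m where m: "\<forall>k. k \<noteq> i \<longrightarrow> 0 \<le> v k \<bullet> ivec m" "v i \<bullet> ivec m < - (y $ i)"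
    using negative_dir[OF inj ind unit full] by blast
  have "m \<in> Lat v (UNIV - {i})" using m(1) by (simp add: Lat_def)
  moreover have "0 \<in> LJ v {} y" using y by (simp add: LJ_empty ivec_zero)
  ultimately have "0 + m \<in> LJ v {} y" using Xi_invariant[OF H] by blast
  then show False using m(2) by (simp add: LJ_empty) (smt (verit))
qed

lemma finite_delta:
  fixes x :: "'a::metric_space"
  assumes "finite A" "\<And>a. a \<in> A \<Longrightarrow> \<exists>d>0. \<forall>y. dist y x < d \<longrightarrow> Q a y"
  shows "\<exists>d>0. \<forall>y. dist y x < d \<longrightarrow> (\<forall>a\<in>A. Q a y)"
  using assms
proof (induction A rule: finite_induct)
  case empty then show ?case by (auto intro: exI[of _ 1])
next
  case (insert a A)
  obtain d1 where d1: "d1 > 0" "\<forall>y. dist y x < d1 \<longrightarrow> Q a y" using insert.prems by blast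
  obtain d2 where d2: "d2 > 0" "\<forall>y. dist y x < d2 \<longrightarrow> (\<forall>a\<in>A. Q a y)" using insert by blast
  show ?case using d1 d2 by (intro exI[of _ "min d1 d2"]) auto
qed

lemma coord_stable:
  fixes x :: "real ^ 'd::finite"
  assumes "c + x $ k = 0 \<Longrightarrow> x $ k = 0"
  shows "\<exists>d>0. \<forall>y. dist y x < d \<longrightarrow> ((\<forall>i. 0 \<le> y $ i) \<longrightarrow> (0 \<le> c + y $ k \<longleftrightarrow> 0 \<le> c + x $ k))"
proof -
  have cmp: "\<bar>y $ k - x $ k\<bar> \<le> dist y x" for y :: "real ^ 'd"
    using component_le_norm_cart[of "y - x" k] by (simp add: dist_norm)
  consider "c + x $ k > 0" | "c + x $ k < 0" | "c + x $ k = 0" by linarith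
  then show ?thesis
  proof cases
    case 1 then show ?thesis
      by (intro exI[of _ "c + x $ k"]) (auto dest!: spec[of _ k] dest: order.strict_trans1[OF cmp]) 
  next
    case 2 then show ?thesis
      by (intro exI[of _ "- (c + x $ k)"]) (auto dest: order.strict_trans1[OF cmp])
  next
    case 3 then show ?thesis using assms by (intro exI[of _ 1]) auto
  qed
qed



lemma Abad_borel:
  fixes W :: "'d::finite \<Rightarrow> real set"
  assumes "\<And>k. countable (W k)"
  shows "{x::real^'d. (\<forall>i. 0 \<le> x $ i) \<and> (\<exists>k. x $ k \<in> W k)} \<in> sets borel"
proof -
  have Wb: "W k \<in> sets borel" for k
    by (rule sets.countable) (auto simp: assms)
  have "(\<lambda>x::real^'d. x $ k) \<in> borel_measurable borel" for k
    by (intro borel_measurable_continuous_onI continuous_intros)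
  note [measurable] = this Wb
  show ?thesis by measurable
qed

theorem mainTheorem13:
  fixes v :: "'d::finite \<Rightarrow> real ^ 'D::finite"
    and f :: "(int ^ 'D) set \<Rightarrow> complex"
  assumes indep: "inj v" "independent (range v)"
    and unit: "\<forall>k. norm (v k) = 1"
    and rci: "RCI v"
    and full: "Xset v UNIV = {x. \<forall>i. 0 \<le> x $ i}"
    and f: "C0 (Cv v) f"
  shows "(\<Union>J\<in>{J. J \<noteq> {}}. XJ v J) \<in> null_sets lborel \<and>
         (\<forall>x. (\<forall>i. 0 \<le> x $ i) \<and> x \<notin> (\<Union>J\<in>{J. J \<noteq> {}}. XJ v J) \<longrightarrow>
              continuous (at x within {y. \<forall>i. 0 \<le> y $ i}) (\<lambda>y. f (LJ v {} y)))"
proof -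
  define W where "W k = range (\<lambda>n. v k \<bullet> ivec n) - {0}" for k
  let ?A = "\<Union>J\<in>{J. J \<noteq> {}}. XJ v J"
  have Aeq: "?A = {x. (\<forall>i. 0 \<le> x $ i) \<and> (\<exists>k. x $ k \<in> W k)}"
  proof
    show "?A \<subseteq> {x. (\<forall>i. 0 \<le> x $ i) \<and> (\<exists>k. x $ k \<in> W k)}"
    proof clarify
      fix x J assume "J \<noteq> {}" "x \<in> XJ v J"
      then obtain k where "k \<in> J" by blast
      from \<open>x \<in> XJ v J\<close> have X: "x \<in> Xset v UNIV" "\<forall>k\<in>J. \<exists>n. x $ k = v k \<bullet> ivec n \<and> x $ k \<noteq> 0"
        unfolding XJ_def by blast+
      from X(2) \<open>k \<in> J\<close> obtain n where "x $ k = v k \<bullet> ivec n" "x $ k \<noteq> 0" by blast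
      then have "x $ k \<in> W k" unfolding W_def by simp
      moreover have "\<forall>i. 0 \<le> x $ i" using X(1) full by simp
      ultimately show "(\<forall>i. 0 \<le> x $ i) \<and> (\<exists>k. x $ k \<in> W k)" by blast
    qed
  next
    show "{x. (\<forall>i. 0 \<le> x $ i) \<and> (\<exists>k. x $ k \<in> W k)} \<subseteq> ?A"
    proof clarify
      fix x k assume "\<forall>i. 0 \<le> x $ i" "x $ k \<in> W k"
      then obtain n where nn: "x $ k = v k \<bullet> ivec n" "x $ k \<noteq> 0" unfolding W_def by blast
      have "x \<in> Xset v UNIV" using full \<open>\<forall>i. 0 \<le> x $ i\<close> by simp
      moreover have "\<exists>n'. x $ k = v k \<bullet> ivec n' \<and> x $ k \<noteq> 0" using nn by blast
      ultimately have "x \<in> XJ v {k}" unfolding XJ_def by blast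
      then show "x \<in> ?A" by blast
    qed
  qed
  have cW: "countable (W k)" for k by (simp add: W_def)
  have null: "?A \<in> null_sets lborel"
  proof -
    have borel: "?A \<in> sets lborel" unfolding Aeq using Abad_borel[OF cW] by simp
    let ?N = "\<Union> (range (\<lambda>(k, n). {x::real^'d. axis k 1 \<bullet> x = v k \<bullet> ivec n}))"
    have "negligible ?N"
    proof (rule negligible_countable_Union)
      show "countable (range (\<lambda>(k, n). {x::real^'d. axis k 1 \<bullet> x = v k \<bullet> ivec n}))" by simp
    next
      fix S assume "S \<in> range (\<lambda>(k, n). {x::real^'d. axis k 1 \<bullet> x = v k \<bullet> ivec n})"
      then show "negligible S" by (auto intro!: negligible_hyperplane simp: axis_eq_0_iff)
    qed
    moreover have "?A \<subseteq> ?N"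
    proof
      fix x assume "x \<in> ?A"
      then obtain k where "x $ k \<in> W k" unfolding Aeq by blast
      then obtain n where n: "x $ k = v k \<bullet> ivec n" unfolding W_def by blast
      have "axis k 1 \<bullet> x = x $ k" by (simp add: cart_eq_inner_axis inner_commute)
      then have "x \<in> {x::real^'d. axis k 1 \<bullet> x = v k \<bullet> ivec n}" using n by simp
      then show "x \<in> ?N" by blast
    qed
    ultimately have "negligible ?A" by (rule negligible_subset)
    then have "?A \<in> null_sets lebesgue" by (simp add: negligible_iff_null_sets)
    then show ?thesis using borel null_sets_completion_iff by blast
  qed
  have inCv: "LJ v {} y \<in> Cv v" if "\<forall>i. 0 \<le> y $ i" for y
    using LJ_in_Xi[OF full that] LJ_notin_Xi[OF indep unit full that] by (auto simp: Cv_def)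
  have fc: "continuous_map (subtopology fell (Cv v)) euclidean f" using f by (simp add: C0_def)
  have cont: "continuous (at x within {y. \<forall>i. 0 \<le> y $ i}) (\<lambda>y. f (LJ v {} y))"
    if x0: "\<forall>i. 0 \<le> x $ i" and xA: "x \<notin> ?A" for x
  proof -
    have hyp: "x $ k = 0" if "x $ k = v k \<bullet> ivec n" for k n
    proof -
      have "x $ k \<in> range (\<lambda>n. v k \<bullet> ivec n)" using that by auto
      then show ?thesis using xA x0 unfolding Aeq W_def by auto
    qed
    let ?P = "LJ v {} x"
    have P: "?P \<in> Cv v" using inCv x0 by blast
    show ?thesis unfolding continuous_within_eps_delta
    proof (intro allI impI)
      fix e :: real assume e: "e > 0"
      have "openin (subtopology fell (Cv v)) {Q \<in> topspace (subtopology fell (Cv v)). f Q \<in> ball (f ?P) e}"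
        by (rule openin_continuous_map_preimage[OF fc]) simp
      then have "openin (subtopology fell (Cv v)) {Q \<in> Cv v. f Q \<in> ball (f ?P) e}"
        by (simp add: topspace_subtopology)
      then obtain U where U: "openin fell U"
        "{Q \<in> Cv v. f Q \<in> ball (f ?P) e} = U \<inter> Cv v"
        unfolding openin_subtopology by blast
      have "?P \<in> {Q \<in> Cv v. f Q \<in> ball (f ?P) e}" using P e by simp
      then have "?P \<in> U" using U(2) by blast
      then obtain F where F: "finite F" "\<forall>Q. (\<forall>n\<in>F. n \<in> Q \<longleftrightarrow> n \<in> ?P) \<longrightarrow> Q \<in> U"
        using fell_nbhd[OF U(1)] by blast
      have pt: "\<exists>d>0. \<forall>y. dist y x < d \<longrightarrow> ((\<forall>i. 0 \<le> y $ i) \<longrightarrow> (p \<in> LJ v {} y \<longleftrightarrow> p \<in> ?P))" for p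
      proof -
        have "\<exists>d>0. \<forall>y. dist y x < d \<longrightarrow> (\<forall>k\<in>UNIV. (\<forall>i. 0 \<le> y $ i) \<longrightarrow>
                (0 \<le> v k \<bullet> ivec p + y $ k \<longleftrightarrow> 0 \<le> v k \<bullet> ivec p + x $ k))"
        proof (rule finite_delta)
          fix k :: 'd
          have "x $ k = 0" if "v k \<bullet> ivec p + x $ k = 0"
            using hyp[of k "- p"] that by (simp add: ivec_minus)
          then show "\<exists>d>0. \<forall>y. dist y x < d \<longrightarrow> ((\<forall>i. 0 \<le> y $ i) \<longrightarrow>
                (0 \<le> v k \<bullet> ivec p + y $ k \<longleftrightarrow> 0 \<le> v k \<bullet> ivec p + x $ k))"
            by (rule coord_stable)
        qed simp
        then obtain d where d: "d > 0" "\<forall>y. dist y x < d \<longrightarrow> (\<forall>k\<in>UNIV. (\<forall>i. 0 \<le> y $ i) \<longrightarrow>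
                (0 \<le> v k \<bullet> ivec p + y $ k \<longleftrightarrow> 0 \<le> v k \<bullet> ivec p + x $ k))" by blast
        show ?thesis
        proof (intro exI[of _ d] conjI allI impI)
          fix y assume "dist y x < d" "\<forall>i. 0 \<le> y $ i"
          then have "\<forall>k. (0 \<le> v k \<bullet> ivec p + y $ k \<longleftrightarrow> 0 \<le> v k \<bullet> ivec p + x $ k)"
            using d(2) by blast
          then show "p \<in> LJ v {} y \<longleftrightarrow> p \<in> ?P" unfolding LJ_empty mem_Collect_eq by presburger
        qed (rule d(1))
      qed
      have "\<exists>d>0. \<forall>y. dist y x < d \<longrightarrow> (\<forall>p\<in>F. (\<forall>i. 0 \<le> y $ i) \<longrightarrow> (p \<in> LJ v {} y \<longleftrightarrow> p \<in> ?P))"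
        by (rule finite_delta[OF F(1)]) (rule pt)
      then obtain d where d: "d > 0" "\<forall>y. dist y x < d \<longrightarrow> (\<forall>p\<in>F. (\<forall>i. 0 \<le> y $ i) \<longrightarrow> (p \<in> LJ v {} y \<longleftrightarrow> p \<in> ?P))"
        by blast
      show "\<exists>d>0. \<forall>y\<in>{y. \<forall>i. 0 \<le> y $ i}. dist y x < d \<longrightarrow> dist (f (LJ v {} y)) (f ?P) < e"
      proof (intro exI[of _ d] conjI ballI impI)
        fix y assume y: "y \<in> {y. \<forall>i. 0 \<le> y $ i}" "dist y x < d"
        then have "\<forall>p\<in>F. p \<in> LJ v {} y \<longleftrightarrow> p \<in> ?P" using d(2) by simp
        then have "LJ v {} y \<in> U" using F(2) by blast
        moreover have "LJ v {} y \<in> Cv v" using inCv y(1) by blast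
        ultimately have "LJ v {} y \<in> {Q \<in> Cv v. f Q \<in> ball (f ?P) e}" using U(2) by blast
        then show "dist (f (LJ v {} y)) (f ?P) < e" by (simp add: dist_commute)
      qed (use d in auto)
    qed
  qed
  show ?thesis using null cont by blast
qed

end
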